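(* Let $(X,G)$ be a Mustafa–Sims metric space which is perfect, i.e. for each $x\in X$ there is a sequence $(x_n)$ in $X\setminus\{x\}$ that $G$-converges to $x$. Then $G$ is symmetric in the sense that $G(x,y,y)=G(x,x,y)$ for all $x,y\in X$.
   Context: A Mustafa–Sims metric on $X$ is a map $G:X^3\to[0,\infty)$ such that: $G$ is invariant under all permutations of its arguments and $G(x,x,x)=0$; $G(x,x,y)=0$ implies $x=y$; $G(x,x,y)\le G(x,y,z)$ whenever $y\ne z$; and $G(x,y,z)\le G(x,u,u)+G(u,y,z)$ for all $x,y,z,u$. A sequence $(x_n)$ $G$-converges to $x$ if $G(x_m,x_n,x)\to0$ as $m,n\to\infty$. *)

theory Defs
  imports Complex_Main
begin

definition G_metric :: "'a set \<Rightarrow> ('a \<Rightarrow> 'a \<Rightarrow> 'a \<Rightarrow> real) \<Rightarrow> bool" where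
  "G_metric X G \<longleftrightarrow>
     (\<forall>x\<in>X. \<forall>y\<in>X. \<forall>z\<in>X. 0 \<le> G x y z) \<and>
     (\<forall>x\<in>X. \<forall>y\<in>X. \<forall>z\<in>X.
        G x y z = G x z y \<and> G x y z = G y x z \<and> G x y z = G y z x \<and>
        G x y z = G z x y \<and> G x y z = G z y x) \<and>
     (\<forall>x\<in>X. G x x x = 0) \<and>
     (\<forall>x\<in>X. \<forall>y\<in>X. G x x y = 0 \<longrightarrow> x = y) \<and>
     (\<forall>x\<in>X. \<forall>y\<in>X. \<forall>z\<in>X. y \<noteq> z \<longrightarrow> G x x y \<le> G x y z) \<and>
     (\<forall>x\<in>X. \<forall>y\<in>X. \<forall>z\<in>X. \<forall>u\<in>X. G x y z \<le> G x u u + G u y z)"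

definition G_converges :: "('a \<Rightarrow> 'a \<Rightarrow> 'a \<Rightarrow> real) \<Rightarrow> (nat \<Rightarrow> 'a) \<Rightarrow> 'a \<Rightarrow> bool" where
  "G_converges G s x \<longleftrightarrow>
     (\<forall>e>0. \<exists>N. \<forall>m\<ge>N. \<forall>n\<ge>N. G (s m) (s n) x < e)"

definition G_perfect :: "'a set \<Rightarrow> ('a \<Rightarrow> 'a \<Rightarrow> 'a \<Rightarrow> real) \<Rightarrow> bool" where
  "G_perfect X G \<longleftrightarrow>
     (\<forall>x\<in>X. \<exists>s. (\<forall>n. s n \<in> X - {x}) \<and> G_converges G s x)"

end

theory Submission
  imports Defs
begin

lemma gm_nonneg: "G_metric X G \<Longrightarrow> x \<in> X \<Longrightarrow> y \<in> X \<Longrightarrow> z \<in> X \<Longrightarrow> 0 \<le> G x y z"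
  unfolding G_metric_def by (elim conjE) blast
lemma gm_p1: "G_metric X G \<Longrightarrow> x \<in> X \<Longrightarrow> y \<in> X \<Longrightarrow> z \<in> X \<Longrightarrow> G x y z = G z y x"
  unfolding G_metric_def by (elim conjE) blast
lemma gm_p2: "G_metric X G \<Longrightarrow> x \<in> X \<Longrightarrow> y \<in> X \<Longrightarrow> z \<in> X \<Longrightarrow> G x y z = G y z x"
  unfolding G_metric_def by (elim conjE) blast
lemma gm_zero: "G_metric X G \<Longrightarrow> x \<in> X \<Longrightarrow> y \<in> X \<Longrightarrow> G x x y = 0 \<Longrightarrow> x = y"
  unfolding G_metric_def by (elim conjE) blast
lemma gm_ax5: "G_metric X G \<Longrightarrow> x \<in> X \<Longrightarrow> y \<in> X \<Longrightarrow> z \<in> X \<Longrightarrow> y \<noteq> z \<Longrightarrow> G x x y \<le> G x y z"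
  unfolding G_metric_def by (elim conjE) blast
lemma gm_rect: "G_metric X G \<Longrightarrow> x \<in> X \<Longrightarrow> y \<in> X \<Longrightarrow> z \<in> X \<Longrightarrow> u \<in> X \<Longrightarrow> G x y z \<le> G x u u + G u y z"
  unfolding G_metric_def by (elim conjE) blast

lemma nonconst:
  assumes gm: "G_metric X G" and x: "x \<in> X" and s: "\<forall>n. s n \<in> X - {x}"
    and c: "G_converges G s x"
  shows "\<exists>m\<ge>N. s m \<noteq> s N"
proof (rule ccontr)
  assume "\<not> (\<exists>m\<ge>N. s m \<noteq> s N)"
  hence eq: "\<And>m. m \<ge> N \<Longrightarrow> s m = s N" by blast
  have lt: "G (s N) (s N) x < e" if e: "e > 0" for e
  proof -
    obtain M where M: "\<forall>m\<ge>M. \<forall>n\<ge>M. G (s m) (s n) x < e"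
      using c e unfolding G_converges_def by blast
    have "G (s (max M N)) (s (max M N)) x < e" using M[rule_format, OF max.cobounded1 max.cobounded1] .
    moreover have "s (max M N) = s N" by (rule eq) simp
    ultimately show ?thesis by simp
  qed
  have sN: "s N \<in> X" "s N \<noteq> x" using s by auto
  have "0 \<le> G (s N) (s N) x" by (rule gm_nonneg[OF gm sN(1) sN(1) x])
  moreover have "\<not> G (s N) (s N) x > 0"
  proof
    assume "G (s N) (s N) x > 0"
    from lt[OF this] show False by simp
  qed
  ultimately have "G (s N) (s N) x = 0" by linarith
  hence "s N = x" by (rule gm_zero[OF gm sN(1) x])
  thus False using sN(2) by contradiction
qed

lemma small:
  assumes gm: "G_metric X G" and x: "x \<in> X" and s: "\<forall>n. s n \<in> X - {x}"
    and c: "G_converges G s x" and e: "e > 0"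
  shows "\<exists>n. G x x (s n) < e"
proof -
  obtain N where N: "\<forall>m\<ge>N. \<forall>n\<ge>N. G (s m) (s n) x < e"
    using c e unfolding G_converges_def by blast
  obtain m where m: "m \<ge> N" "s m \<noteq> s N" using nonconst[OF gm x s c, where N=N] by blast
  have sN: "s N \<in> X" "s m \<in> X" using s by auto
  have h1: "G x x (s N) \<le> G x (s N) (s m)" by (rule gm_ax5[OF gm x sN(1) sN(2) m(2)[symmetric]])
  have h2: "G x (s N) (s m) = G (s N) (s m) x" by (rule gm_p2[OF gm x sN(1) sN(2)])
  have h3: "G (s N) (s m) x < e" using N[rule_format, OF order_refl m(1)] .
  have "G x x (s N) < e" using h1 h2 h3 by linarith
  thus ?thesis by blast
qed

lemma key:
  assumes gm: "G_metric X G" and p: "G_perfect X G" and x: "x \<in> X" and y: "y \<in> X"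
  shows "G y y x \<le> G x x y"
proof -
  obtain s where s: "\<forall>n. s n \<in> X - {x}" and c: "G_converges G s x"
    using p x unfolding G_perfect_def by blast
  have "G y y x \<le> G x x y + e" if e: "e > 0" for e
  proof -
    obtain n where n: "G x x (s n) < e" using small[OF gm x s c e] by blast
    have sn: "s n \<in> X" "x \<noteq> s n" using s by auto
    have h1: "G y y x \<le> G y x (s n)" by (rule gm_ax5[OF gm y x sn(1) sn(2)])
    have h2: "G y x (s n) \<le> G y x x + G x x (s n)" by (rule gm_rect[OF gm y x sn(1) x])
    have h3: "G y x x = G x x y" using gm_p1[OF gm y x x] .
    show ?thesis using h1 h2 h3 n by linarith
  qed
  thus ?thesis by (rule field_le_epsilon)
qed

theorem proposition7:
  fixes X :: "'a set" and G :: "'a \<Rightarrow> 'a \<Rightarrow> 'a \<Rightarrow> real"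
  assumes "G_metric X G" and "G_perfect X G"
  shows "\<forall>x\<in>X. \<forall>y\<in>X. G x y y = G x x y"
proof (intro ballI)
  fix x y assume x: "x \<in> X" and y: "y \<in> X"
  have p: "G x y y = G y y x" using gm_p1[OF assms(1) x y y] .
  show "G x y y = G x x y"
    using key[OF assms x y] key[OF assms y x] p by linarith
qed

end
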